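(* (1) For the $A_r$ $Q$-system with initial data $R_{\alpha,0}=R_{\alpha,1}=1$ for all $\alpha\in I_r$, $$\sum_{n\ge0}R_{1,n}t^n=1+t\,\frac{P_r(t)}{P_{r+1}(t)},\qquad P_m(t)=t^{m/2}\,U_m\!\left(\tfrac1{\sqrt t}-\sqrt t\right),$$ where $U_m$ is the Chebyshev polynomial of the second kind, $U_m(2\cos\theta)=\frac{\sin(m+1)\theta}{\sin\theta}$ (each $P_m$ is a polynomial in $t$). (2) For the $A_{\infty/2}$ $Q$-system with initial data $R_{\alpha,0}=R_{\alpha,1}=1$ for all $\alpha\ge1$, $$\sum_{n\ge0}R_{1,n}t^n=\frac{3-t-\sqrt{1-6t+t^2}}{2}=1+t+2t^2+6t^3+22t^4+90t^5+\cdots,$$ i.e. $R_{1,n}$ is the large Schröder number $S_{n-1}$ for $n\ge1$.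
   Context: For $r\ge1$, $I_r=\{1,\dots,r\}$, the $A_r$ $Q$-system is the family $(R_{\alpha,n})_{0\le\alpha\le r+1,n\in\mathbb Z}$ with $R_{0,n}=R_{r+1,n}=1$ and $R_{\alpha,n+1}R_{\alpha,n-1}=R_{\alpha,n}^2+R_{\alpha+1,n}R_{\alpha-1,n}$ for $\alpha\in I_r$, $n\in\mathbb Z$, determined by the values $R_{\alpha,0},R_{\alpha,1}$. The $A_{\infty/2}$ $Q$-system is the family $(R_{\alpha,n})_{\alpha\ge0,n\in\mathbb Z}$ with $R_{0,n}=1$ and the same relation for all $\alpha\ge1$ (no upper boundary condition), determined by $R_{\alpha,0},R_{\alpha,1}$ for $\alpha\ge1$. With the stated unit initial data all values are positive rational numbers. *)

theory Defs
  imports Complex_Main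
begin

text \<open>Chebyshev polynomials of the second kind, normalised so that
  U_m(2 cos theta) = sin((m+1) theta) / sin theta, i.e.
  U_0 = 1, U_1 = x, U_(m+2) = x U_(m+1) - U_m.\<close>
fun chebU :: "nat \<Rightarrow> real \<Rightarrow> real" where
  "chebU 0 x = 1"
| "chebU (Suc 0) x = x"
| "chebU (Suc (Suc m)) x = x * chebU (Suc m) x - chebU m x"

definition P_cheb :: "nat \<Rightarrow> real \<Rightarrow> real" where
  "P_cheb m t = t powr (real m / 2) * chebU m (1 / sqrt t - sqrt t)"

definition is_Ar_Qsystem :: "nat \<Rightarrow> (nat \<Rightarrow> int \<Rightarrow> real) \<Rightarrow> bool" where
  "is_Ar_Qsystem r R \<longleftrightarrow>
     (\<forall>n. R 0 n = 1) \<and> (\<forall>n. R (r + 1) n = 1) \<and>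
     (\<forall>\<alpha>\<in>{1..r}. \<forall>n. R \<alpha> (n + 1) * R \<alpha> (n - 1) = (R \<alpha> n)^2 + R (\<alpha> + 1) n * R (\<alpha> - 1) n)"

definition is_Ainf_Qsystem :: "(nat \<Rightarrow> int \<Rightarrow> real) \<Rightarrow> bool" where
  "is_Ainf_Qsystem R \<longleftrightarrow>
     (\<forall>n. R 0 n = 1) \<and>
     (\<forall>\<alpha>\<ge>1. \<forall>n. R \<alpha> (n + 1) * R \<alpha> (n - 1) = (R \<alpha> n)^2 + R (\<alpha> + 1) n * R (\<alpha> - 1) n)"

end

theory Submission
  imports Defs "HOL-Computational_Algebra.Polynomial_FPS"
begin

fun Rg :: "(nat \<Rightarrow> bool) \<Rightarrow> nat \<Rightarrow> nat \<Rightarrow> real" where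
  "Rg B a 0 = 1"
| "Rg B a (Suc 0) = 1"
| "Rg B a (Suc (Suc m)) = (if B a then 1 else
     (Rg B a (Suc m) ^ 2 + Rg B (Suc a) (Suc m) * Rg B (a - 1) (Suc m)) / Rg B a m)"

lemma Rg_pos: "Rg B a m > 0"
  by (induction B a m rule: Rg.induct) (auto intro!: divide_pos_pos add_pos_pos)

lemma Rg_bd: "B a \<Longrightarrow> Rg B a m = 1"
  by (induction B a m rule: Rg.induct) auto

lemma Rg_rec: "\<not> B a \<Longrightarrow>
  Rg B a (Suc (Suc m)) * Rg B a m = Rg B a (Suc m) ^ 2 + Rg B (Suc a) (Suc m) * Rg B (a - 1) (Suc m)"
  using Rg_pos[of B a m] by simp

declare Rg.simps(3)[simp del]

definition Br :: "nat \<Rightarrow> nat \<Rightarrow> bool" where "Br r a = (a = 0 \<or> r < a)"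

lemma Ar_unique:
  assumes Q: "is_Ar_Qsystem r R" and I: "\<forall>\<alpha>\<in>{1..r}. R \<alpha> 0 = 1 \<and> R \<alpha> 1 = 1"
  shows "\<forall>a\<le>r+1. R a (int m) = Rg (Br r) a m \<and> R a (int m + 1) = Rg (Br r) a (Suc m)"
proof (induction m)
  case 0
  have "R a 0 = 1 \<and> R a 1 = 1" if "a \<le> r+1" for a
    using Q I that unfolding is_Ar_Qsystem_def
    by (cases "a = 0 \<or> a = r+1") auto
  then show ?case by simp
next
  case (Suc m)
  show ?case
  proof (intro allI impI conjI)
    fix a assume a: "a \<le> r + 1"
    show "R a (int (Suc m)) = Rg (Br r) a (Suc m)" using Suc a by (simp add: add.commute)
    show "R a (int (Suc m) + 1) = Rg (Br r) a (Suc (Suc m))"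
    proof (cases "a = 0 \<or> a = r+1")
      case True
      then show ?thesis using Q by (auto simp: is_Ar_Qsystem_def Br_def Rg_bd)
    next
      case False
      then have a1: "a \<in> {1..r}" using a by auto
      have rel: "R a (int m + 1 + 1) * R a (int m + 1 - 1) = (R a (int m + 1))^2 + R (a+1) (int m + 1) * R (a - 1) (int m + 1)"
        using Q a1 unfolding is_Ar_Qsystem_def by blast
      have e1: "R a (int m + 1 - 1) = Rg (Br r) a m" using Suc a by simp
      have e2: "R a (int m + 1) = Rg (Br r) a (Suc m)" using Suc a by simp
      have e3: "R (a+1) (int m + 1) = Rg (Br r) (Suc a) (Suc m)" using Suc a1 by simp
      have e4: "R (a-1) (int m + 1) = Rg (Br r) (a-1) (Suc m)" using Suc[rule_format, of "a-1"] a1 by auto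
      have nb: "\<not> Br r a" using a1 by (simp add: Br_def)
      have "R a (int m + 1 + 1) * Rg (Br r) a m = Rg (Br r) a (Suc (Suc m)) * Rg (Br r) a m"
        using rel e1 e2 e3 e4 Rg_rec[of "Br r" a m, OF nb] by simp
      then have "R a (int m + 1 + 1) = Rg (Br r) a (Suc (Suc m))"
        using Rg_pos[of "Br r" a m] by simp
      moreover have "int (Suc m) + 1 = int m + 1 + 1" by simp
      ultimately show ?thesis by simp
    qed
  qed
qed

lemma Ainf_unique:
  assumes Q: "is_Ainf_Qsystem R" and I: "\<forall>\<alpha>\<ge>1. R \<alpha> 0 = 1 \<and> R \<alpha> 1 = 1"
  shows "\<forall>a. R a (int m) = Rg (\<lambda>a. a = 0) a m \<and> R a (int m + 1) = Rg (\<lambda>a. a = 0) a (Suc m)"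
proof (induction m)
  case 0
  have "R a 0 = 1 \<and> R a 1 = 1" for a
    using Q I unfolding is_Ainf_Qsystem_def
    by (cases "a = 0") auto
  then show ?case by simp
next
  case (Suc m)
  show ?case
  proof (intro allI impI conjI)
    fix a
    show "R a (int (Suc m)) = Rg (\<lambda>a. a = 0) a (Suc m)" using Suc by (simp add: add.commute)
    show "R a (int (Suc m) + 1) = Rg (\<lambda>a. a = 0) a (Suc (Suc m))"
    proof (cases "a = 0")
      case True
      then show ?thesis using Q by (auto simp: is_Ainf_Qsystem_def Rg_bd)
    next
      case False
      then have a1: "a \<ge> 1" by auto
      have rel: "R a (int m + 1 + 1) * R a (int m + 1 - 1) = (R a (int m + 1))^2 + R (a+1) (int m + 1) * R (a - 1) (int m + 1)"
        using Q a1 unfolding is_Ainf_Qsystem_def by blast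
      have e1: "R a (int m + 1 - 1) = Rg (\<lambda>a. a = 0) a m" using Suc by simp
      have e2: "R a (int m + 1) = Rg (\<lambda>a. a = 0) a (Suc m)" using Suc by simp
      have e3: "R (a+1) (int m + 1) = Rg (\<lambda>a. a = 0) (Suc a) (Suc m)" using Suc by simp
      have e4: "R (a-1) (int m + 1) = Rg (\<lambda>a. a = 0) (a-1) (Suc m)" using Suc by simp
      have nb: "\<not> (\<lambda>a. a = 0) a" using a1 by simp
      have "R a (int m + 1 + 1) * Rg (\<lambda>a. a = 0) a m = Rg (\<lambda>a. a = 0) a (Suc (Suc m)) * Rg (\<lambda>a. a = 0) a m"
        using rel e1 e2 e3 e4 Rg_rec[of "\<lambda>a. a = 0" a m, OF nb] by simp
      then have "R a (int m + 1 + 1) = Rg (\<lambda>a. a = 0) a (Suc (Suc m))"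
        using Rg_pos[of "\<lambda>a. a = 0" a m] by simp
      moreover have "int (Suc m) + 1 = int m + 1 + 1" by simp
      ultimately show ?thesis by simp
    qed
  qed
qed

lemma step_poly:
  fixes A B C C' B' :: "real poly"
  assumes rec1: "C = B - smult a2 (pCons 0 B) - smult b2 (pCons 0 A)"
    and c1: "C' = smult u1 C + smult (1-u1) B" and c2: "B' = smult u2 B + smult (1-u2) A"
    and E1: "b' * (1-u2) = b2 * (1-u1)" and E2: "a' * u1 = u0 * a"
    and E3: "(1-u1)*(a' - a2) + b'*u2 = u0*b"
  shows "C' - smult a' (pCons 0 C') - smult b' (pCons 0 B') =
         smult u0 (C - smult a (pCons 0 C) - smult b (pCons 0 B)) + smult (1-u0) C"
proof (rule poly_eqI)
  fix i
  show "coeff (C' - smult a' (pCons 0 C') - smult b' (pCons 0 B')) i =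
        coeff (smult u0 (C - smult a (pCons 0 C) - smult b (pCons 0 B)) + smult (1-u0) C) i"
  proof (cases i)
    case 0
    have "coeff C 0 = coeff B 0" using rec1 by simp
    then show ?thesis using c1 0 by (simp add: algebra_simps)
  next
    case (Suc k)
    have r: "coeff C (Suc k) = coeff B (Suc k) - a2 * coeff B k - b2 * coeff A k"
      using rec1 by simp
    define B1 where "B1 = coeff B (Suc k)"
    define Bk where "Bk = coeff B k"
    define Ak where "Ak = coeff A k"
    define Ck where "Ck = coeff C k"
    have L: "coeff (C' - smult a' (pCons 0 C') - smult b' (pCons 0 B')) i =
       u1*(B1 - a2*Bk - b2*Ak) + (1-u1)*B1 - a'*(u1*Ck + (1-u1)*Bk) - b'*(u2*Bk + (1-u2)*Ak)"
      using Suc c1 c2 r by (simp add: B1_def Bk_def Ak_def Ck_def)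
    have R: "coeff (smult u0 (C - smult a (pCons 0 C) - smult b (pCons 0 B)) + smult (1-u0) C) i
       = u0*((B1 - a2*Bk - b2*Ak) - a*Ck - b*Bk) + (1-u0)*(B1 - a2*Bk - b2*Ak)"
      using Suc r by (simp add: B1_def Bk_def Ak_def Ck_def)
    have z1: "u0*a - a'*u1 = 0" using E2 by simp
    have z2: "a2 + u0*b - u1*a2 - a'*(1-u1) - b'*u2 = 0" using E3 by (simp add: algebra_simps)
    have z3: "b2*(1-u1) - b'*(1-u2) = 0" using E1 by simp
    have "(u1*(B1 - a2*Bk - b2*Ak) + (1-u1)*B1 - a'*(u1*Ck + (1-u1)*Bk) - b'*(u2*Bk + (1-u2)*Ak))
        - (u0*((B1 - a2*Bk - b2*Ak) - a*Ck - b*Bk) + (1-u0)*(B1 - a2*Bk - b2*Ak))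
       = (u0*a - a'*u1) * Ck + (a2 + u0*b - u1*a2 - a'*(1-u1) - b'*u2) * Bk
         + (b2*(1-u1) - b'*(1-u2)) * Ak"
      by (simp add: algebra_simps)
    then show ?thesis unfolding L R using z1 z2 z3 by simp
  qed
qed

lemma E2abs:
  fixes R0 R1 S0 S1 T0 T1 :: real
  assumes "R0 > 0" "R1 > 0" "S0 > 0" "S1 > 0" "T0 > 0" "T1 > 0"
  shows "(T1*S0/(S1*T0)) * (S1^2/(R1*T1)) = (S0^2/(R0*T0)) * (S1*R0/(R1*S0))"
  using assms by (simp add: field_simps power2_eq_square)

lemma E1abs:
  fixes R1 R2 S0 S1 S2 S3 T1 T2 :: real
  assumes "R1 > 0" "R2 > 0" "S0 > 0" "S1 > 0" "S2 > 0" "S3 > 0" "T1 > 0" "T2 > 0"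
    and h1: "R1*T1 = S1^2 + S2*S0" and h2: "R2*T2 = S2^2 + S3*S1"
  shows "(T2*S0/(S1*T1)) * (1 - S2^2/(R2*T2)) = (S3*R1/(R2*S2)) * (1 - S1^2/(R1*T1))"
proof -
  have a: "1 - S2^2/(R2*T2) = S3*S1/(R2*T2)"
  proof -
    have "1 - S2^2/(R2*T2) = (R2*T2 - S2^2)/(R2*T2)" using assms(1-8) by (simp add: diff_divide_distrib)
    also have "\<dots> = S3*S1/(R2*T2)" using h2 by simp
    finally show ?thesis .
  qed
  have b: "1 - S1^2/(R1*T1) = S2*S0/(R1*T1)"
  proof -
    have "1 - S1^2/(R1*T1) = (R1*T1 - S1^2)/(R1*T1)" using assms(1-8) by (simp add: diff_divide_distrib)
    also have "\<dots> = S2*S0/(R1*T1)" using h1 by simp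
    finally show ?thesis .
  qed
  show ?thesis unfolding a b using assms(1-8) by (simp add: field_simps)
qed

lemma E3abs:
  fixes R0 R1 R2 S0 S1 S2 T0 T1 T2 :: real
  assumes "R0 > 0" "R1 > 0" "R2 > 0" "S0 > 0" "S1 > 0" "S2 > 0" "T0 > 0" "T1 > 0" "T2 > 0"
    and h1: "R1*T1 = S1^2 + S2*S0"
  shows "(1 - S1^2/(R1*T1))*(T1*S0/(S1*T0) - S2*R1/(R2*S1)) + T2*S0/(S1*T1)*(S2^2/(R2*T2))
       = S0^2/(R0*T0)*(S2*R0/(R1*S1))"
proof -
  have b: "1 - S1^2/(R1*T1) = S2*S0/(R1*T1)"
  proof -
    have "1 - S1^2/(R1*T1) = (R1*T1 - S1^2)/(R1*T1)" using assms(1-8) by (simp add: diff_divide_distrib)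
    also have "\<dots> = S2*S0/(R1*T1)" using h1 by simp
    finally show ?thesis .
  qed
  show ?thesis unfolding b using assms(1-9) by (simp add: field_simps power2_eq_square)
qed

definition X :: "nat \<Rightarrow> nat \<Rightarrow> nat \<Rightarrow> real" where "X r n a = Rg (Br r) a n"
definition aw where "aw r n a = X r (n+1) a * X r n (a-1) / (X r n a * X r (n+1) (a-1))"
definition bw where "bw r n a = (if a \<le> r then X r (n+1) (a+1) * X r n (a-1) / (X r n a * X r (n+1) a) else 0)"
definition uw where "uw r n a = X r (n+1) (a-1)^2 / (X r n (a-1) * X r (n+2) (a-1))"

fun Qe :: "nat \<Rightarrow> nat \<Rightarrow> nat \<Rightarrow> real poly" where
  "Qe r n 0 = 0"
| "Qe r n (Suc 0) = 1"
| "Qe r n (Suc (Suc j)) = Qe r n (Suc j) - smult (aw r n (r+1-j)) (pCons 0 (Qe r n (Suc j)))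
      - smult (bw r n (r+1-j)) (pCons 0 (Qe r n j))"

lemma Xpos: "X r n a > 0" unfolding X_def by (rule Rg_pos)
lemma Xbd: "a = 0 \<or> r < a \<Longrightarrow> X r n a = 1" unfolding X_def by (rule Rg_bd) (simp add: Br_def)
lemma X01[simp]: "X r 0 a = 1" "X r 1 a = 1" "X r (Suc 0) a = 1" unfolding X_def by simp_all
lemma Xrel: "1 \<le> a \<Longrightarrow> a \<le> r \<Longrightarrow>
   X r (n+2) a * X r n a = X r (n+1) a ^2 + X r (n+1) (a+1) * X r (n+1) (a-1)"
  unfolding X_def using Rg_rec[of "Br r" a n] by (simp add: Br_def)

lemma E1X:
  assumes "1 \<le> a" "a \<le> r"
  shows "bw r (n+1) a * (1 - uw r n (a+2)) = bw r n (a+1) * (1 - uw r n (a+1))"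
proof (cases "a < r")
  case True
  have h1: "X r n a * X r (n+2) a = X r (n+1) a ^2 + X r (n+1) (a+1) * X r (n+1) (a-1)"
    using Xrel[of a r n] assms by (simp add: mult.commute)
  have h2: "X r n (a+1) * X r (n+2) (a+1) = X r (n+1) (a+1) ^2 + X r (n+1) (a+2) * X r (n+1) a"
    using Xrel[of "a+1" r n] assms True by (simp add: mult.commute numeral_2_eq_2)
  show ?thesis
    using E1abs[OF Xpos Xpos Xpos Xpos Xpos Xpos Xpos Xpos h1 h2] assms True
    by (simp add: bw_def uw_def numeral_2_eq_2)
next
  case False
  then have "a = r" using assms by simp
  then show ?thesis by (simp add: bw_def uw_def Xbd)
qed

lemma E2X:
  assumes "1 \<le> a"
  shows "aw r (n+1) a * uw r n (a+1) = uw r n a * aw r n a"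
  using E2abs[of "X r n (a-1)" "X r n a" "X r (n+1) (a-1)" "X r (n+1) a" "X r (n+2) (a-1)" "X r (n+2) a", OF Xpos Xpos Xpos Xpos Xpos Xpos] assms
  unfolding aw_def uw_def by (simp add: numeral_2_eq_2)

lemma E3X:
  assumes "1 \<le> a" "a \<le> r"
  shows "(1 - uw r n (a+1)) * (aw r (n+1) a - aw r n (a+1)) + bw r (n+1) a * uw r n (a+2) = uw r n a * bw r n a"
proof -
  have h1: "X r n a * X r (n+2) a = X r (n+1) a ^2 + X r (n+1) (a+1) * X r (n+1) (a-1)"
    using Xrel[of a r n] assms by (simp add: mult.commute)
  show ?thesis
    using E3abs[of "X r n (a-1)" "X r n a" "X r n (a+1)" "X r (n+1) (a-1)" "X r (n+1) a" "X r (n+1) (a+1)"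
       "X r (n+2) (a-1)" "X r (n+2) a" "X r (n+2) (a+1)", OF Xpos Xpos Xpos Xpos Xpos Xpos Xpos Xpos Xpos h1] assms
    unfolding aw_def bw_def uw_def by (simp add: numeral_2_eq_2)
qed

lemma uw_top: "uw r n (r+2) = 1" by (simp add: uw_def Xbd)
lemma uw_one: "uw r n 1 = 1" by (simp add: uw_def Xbd)

lemma Qe_C:
  "1 \<le> j \<Longrightarrow> j \<le> r+2 \<Longrightarrow>
   Qe r (Suc n) j = smult (uw r n (r+3-j)) (Qe r n j) + smult (1 - uw r n (r+3-j)) (Qe r n (j-1))"
proof (induction j rule: less_induct)
  case (less j)
  show ?case
  proof (cases "j \<le> 2")
    case True
    then consider "j = 1" | "j = 2" using less.prems by linarith
    then show ?thesis
    proof cases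
      case 1
      then show ?thesis using uw_top[of r n] by (simp add: numeral_3_eq_3)
    next
      case 2
      have e: "aw r (Suc n) (r+1) = uw r n (r+1) * aw r n (r+1)"
        using E2X[of "r+1" r n] uw_top[of r n] by simp
      have q1: "Qe r (Suc n) 2 = [:1, - aw r (Suc n) (r+1):]"
        by (simp add: numeral_2_eq_2 one_pCons)
      moreover have q2: "Qe r n 2 = [:1, - aw r n (r+1):]"
        by (simp add: numeral_2_eq_2 one_pCons)
      moreover have "r + 3 - 2 = r + 1" by simp
      ultimately show ?thesis using 2 e
        by (simp add: one_pCons algebra_simps)
    qed
  next
    case False
    then obtain k where k: "j = Suc (Suc k)" "1 \<le> k" by (cases j; cases "j - 1") auto
    have kr: "k \<le> r" using less.prems k by simp
    define a where "a = r + 1 - k"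
    have a1: "1 \<le> a" "a \<le> r" using kr k by (auto simp: a_def)
    have ih1: "Qe r (Suc n) (Suc k) = smult (uw r n (a+1)) (Qe r n (Suc k)) + smult (1 - uw r n (a+1)) (Qe r n k)"
      using less.IH[of "Suc k"] k kr by (simp add: a_def Suc_diff_le)
    have ih2: "Qe r (Suc n) k = smult (uw r n (a+2)) (Qe r n k) + smult (1 - uw r n (a+2)) (Qe r n (k-1))"
    proof -
      have e: "r + 3 - k = a + 2" using kr k by (simp add: a_def)
      show ?thesis using less.IH[of k] k kr by (simp only: e)
    qed
    have rec1: "Qe r n (Suc k) = Qe r n k - smult (aw r n (a+1)) (pCons 0 (Qe r n k))
        - smult (bw r n (a+1)) (pCons 0 (Qe r n (k-1)))"
      using k kr by (cases k) (simp_all add: a_def Suc_diff_le)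
    have st: "Qe r (Suc n) (Suc k) - smult (aw r (Suc n) a) (pCons 0 (Qe r (Suc n) (Suc k)))
        - smult (bw r (Suc n) a) (pCons 0 (Qe r (Suc n) k)) =
        smult (uw r n a) (Qe r n (Suc k) - smult (aw r n a) (pCons 0 (Qe r n (Suc k)))
           - smult (bw r n a) (pCons 0 (Qe r n k))) + smult (1 - uw r n a) (Qe r n (Suc k))"
      using step_poly[OF rec1 ih1 ih2] E1X[OF a1, of n] E2X[OF a1(1), of r n] E3X[OF a1, of n] by simp
    have "r + 3 - j = a" using k kr by (simp add: a_def)
    then show ?thesis using st k by (simp add: a_def)
  qed
qed

lemma Qe_cons: "Qe r (Suc n) (r+2) = Qe r n (r+2)"
  using Qe_C[of "r+2" r n] uw_one[of r n] by simp

lemma Qe_cons0: "Qe r n (r+2) = Qe r 0 (r+2)"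
proof (induction n)
  case (Suc n)
  then show ?case using Qe_cons[of r n] by metis
qed (rule refl)

lemma lev1:
  assumes r: "1 \<le> r"
  shows "Qe r n (r+1) = Qe r n (r+2) + smult (X r (n+2) 1 / X r (n+1) 1) (pCons 0 (Qe r (Suc n) (r+1)))"
proof -
  have c: "Qe r (Suc n) (r+1) = smult (uw r n 2) (Qe r n (r+1)) + smult (1 - uw r n 2) (Qe r n r)"
    using Qe_C[of "r+1" r n] r by simp
  have rec: "Qe r n (r+2) = Qe r n (r+1) - smult (aw r n 1) (pCons 0 (Qe r n (r+1)))
        - smult (bw r n 1) (pCons 0 (Qe r n r))"
    by (simp add: numeral_2_eq_2)
  have pS1: "X r (n+1) 1 > 0" "X r n 1 > 0" "X r (n+2) 1 > 0" "X r (n+1) 2 > 0" by (simp_all add: Xpos)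
  have h1: "X r (n+2) 1 * X r n 1 = X r (n+1) 1 ^2 + X r (n+1) 2 * X r (n+1) 0"
    using Xrel[of 1 r n] r by (simp add: numeral_2_eq_2)
  have x0: "X r k 0 = 1" for k by (simp add: Xbd)
  have ea: "aw r n 1 = (X r (n+2) 1 / X r (n+1) 1) * uw r n 2"
    using pS1 by (simp add: aw_def uw_def x0 field_simps power2_eq_square)
  have eb: "bw r n 1 = (X r (n+2) 1 / X r (n+1) 1) * (1 - uw r n 2)"
  proof -
    have "1 - uw r n 2 = (X r n 1 * X r (n+2) 1 - X r (n+1) 1^2)/(X r n 1 * X r (n+2) 1)"
      using pS1 by (simp add: uw_def x0 diff_divide_distrib)
    also have "\<dots> = X r (n+1) 2 / (X r n 1 * X r (n+2) 1)"
      using h1 x0 by (simp add: mult.commute)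
    finally have "1 - uw r n 2 = X r (n+1) 2 / (X r n 1 * X r (n+2) 1)" .
    then show ?thesis using pS1 r by (simp add: bw_def x0 field_simps numeral_2_eq_2)
  qed
  show ?thesis unfolding c rec ea eb
    by (simp add: smult_add_right smult_diff_right algebra_simps)
qed

definition Mp where "Mp r n = smult (X r (n+1) 1) (Qe r n (r+1))"

lemma Mp_rec:
  assumes "1 \<le> r"
  shows "Mp r n = smult (X r (n+1) 1) (Qe r 0 (r+2)) + pCons 0 (Mp r (Suc n))"
proof -
  have p: "X r (n+1) 1 > 0" by (simp add: Xpos)
  have "Mp r n = smult (X r (n+1) 1) (Qe r n (r+2)) + smult (X r (n+1) 1 * (X r (n+2) 1 / X r (n+1) 1)) (pCons 0 (Qe r (Suc n) (r+1)))"
    unfolding Mp_def by (subst lev1[OF assms]) (simp add: smult_add_right)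
  also have "X r (n+1) 1 * (X r (n+2) 1 / X r (n+1) 1) = X r (n+2) 1" using p by simp
  finally show ?thesis unfolding Qe_cons0[of r n] by (simp add: Mp_def del: Qe.simps)
qed

lemma Mp_coeff:
  assumes "1 \<le> r"
  shows "coeff (Mp r n) j = (\<Sum>i\<le>j. X r (n+1+i) 1 * coeff (Qe r 0 (r+2)) (j-i))"
proof (induction j arbitrary: n)
  case 0
  then show ?case by (subst Mp_rec[OF assms]) simp
next
  case (Suc j)
  have "coeff (Mp r n) (Suc j) = X r (n+1) 1 * coeff (Qe r 0 (r+2)) (Suc j) + coeff (Mp r (Suc n)) j"
    by (subst Mp_rec[OF assms]) simp
  also have "\<dots> = X r (n+1) 1 * coeff (Qe r 0 (r+2)) (Suc j) + (\<Sum>i\<le>j. X r (n+2+i) 1 * coeff (Qe r 0 (r+2)) (j-i))"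
    using Suc.IH[of "Suc n"] by simp
  also have "\<dots> = (\<Sum>i\<le>Suc j. X r (n+1+i) 1 * coeff (Qe r 0 (r+2)) (Suc j-i))"
    by (subst sum.atMost_Suc_shift) simp
  finally show ?case .
qed

fun Pp :: "nat \<Rightarrow> real poly" where
  "Pp 0 = 1"
| "Pp (Suc 0) = [:1, -1:]"
| "Pp (Suc (Suc m)) = [:1, -1:] * Pp (Suc m) - pCons 0 (Pp m)"

lemma aw0: "aw r 0 a = 1" by (simp add: aw_def X01)
lemma bw0: "bw r 0 a = (if a \<le> r then 1 else 0)" by (simp add: bw_def X01)

lemma Qe0: "j \<le> r+1 \<Longrightarrow> Qe r 0 (Suc j) = Pp j"
proof (induction j rule: less_induct)
  case (less j)
  show ?case
  proof (cases j)
    case 0 then show ?thesis by simp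
  next
    case (Suc k)
    show ?thesis
    proof (cases k)
      case 0
      then show ?thesis using Suc by (simp add: aw0 one_pCons)
    next
      case (Suc k')
      have i1: "Qe r 0 (Suc k) = Pp k"
        by (rule less.IH) (use less.prems \<open>j = Suc k\<close> in auto)
      have i2: "Qe r 0 k = Pp k'" unfolding Suc
        by (rule less.IH) (use less.prems \<open>j = Suc k\<close> Suc in auto)
      have b: "bw r 0 (r + 1 - k) = 1" using bw0 Suc by simp
      have "Qe r 0 (Suc j) = Qe r 0 (Suc k) - smult (aw r 0 (r+1-k)) (pCons 0 (Qe r 0 (Suc k)))
          - smult (bw r 0 (r+1-k)) (pCons 0 (Qe r 0 k))"
        using \<open>j = Suc k\<close> by (simp only: Qe.simps(3))
      also have "\<dots> = Pp k - pCons 0 (Pp k) - pCons 0 (Pp k')"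
        unfolding i1 i2 b aw0 by simp
      also have "\<dots> = Pp j" using \<open>j = Suc k\<close> Suc
        by (simp add: algebra_simps)
      finally show ?thesis .
    qed
  qed
qed

theorem coeff_identity:
  assumes "1 \<le> r"
  shows "(\<Sum>i\<le>j. X r (Suc i) 1 * coeff (Pp (r+1)) (j-i)) = coeff (Pp r) j"
proof -
  have "Mp r 0 = Pp r" using Qe0[of r r] by (simp add: Mp_def X01)
  moreover have "Qe r 0 (r+2) = Pp (r+1)" using Qe0[of "r+1" r] by simp
  ultimately show ?thesis using Mp_coeff[OF assms, of 0 j] by simp
qed

lemma sum_abs_coeff_le:
  fixes p :: "real poly"
  shows "(\<Sum>k\<le>N. \<bar>coeff p k\<bar>) \<le> (\<Sum>k\<le>degree p. \<bar>coeff p k\<bar>)"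
proof -
  have "(\<Sum>k\<le>N. \<bar>coeff p k\<bar>) = (\<Sum>k\<in>{..N} \<inter> {..degree p}. \<bar>coeff p k\<bar>)"
    by (rule sum.mono_neutral_right) (auto intro: le_degree)
  also have "\<dots> \<le> (\<Sum>k\<le>degree p. \<bar>coeff p k\<bar>)"
    by (rule sum_mono2) auto
  finally show ?thesis .
qed

lemma abs_coeff_le:
  fixes p :: "real poly"
  shows "\<bar>coeff p j\<bar> \<le> (\<Sum>k\<le>degree p. \<bar>coeff p k\<bar>)"
proof -
  have "\<bar>coeff p j\<bar> \<le> (\<Sum>k\<le>j. \<bar>coeff p k\<bar>)"
    by (rule member_le_sum) auto
  also have "\<dots> \<le> (\<Sum>k\<le>degree p. \<bar>coeff p k\<bar>)" by (rule sum_abs_coeff_le)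
  finally show ?thesis .
qed

lemma poly_sums:
  fixes p :: "real poly"
  shows "(\<lambda>k. coeff p k * t^k) sums poly p t"
proof -
  have "(\<lambda>k. coeff p k * t^k) sums (\<Sum>k\<in>{..degree p}. coeff p k * t^k)"
    by (rule sums_finite) (auto simp: coeff_eq_0)
  then show ?thesis by (simp add: poly_altdef)
qed

lemma series_rational:
  fixes c :: "nat \<Rightarrow> real" and Dp Mq :: "real poly"
  assumes d0: "coeff Dp 0 = 1"
    and conv: "\<And>j. (\<Sum>i\<le>j. c i * coeff Dp (j-i)) = coeff Mq j"
  shows "\<exists>\<epsilon>>0. \<forall>t. \<bar>t\<bar> < \<epsilon> \<longrightarrow> poly Dp t \<noteq> 0 \<and> (\<lambda>k. c k * t^k) sums (poly Mq t / poly Dp t)"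
proof -
  define B where "B = 1 + (\<Sum>k\<le>degree Dp. \<bar>coeff Dp k\<bar>)"
  define C where "C = 1 + (\<Sum>k\<le>degree Mq. \<bar>coeff Mq k\<bar>)"
  have B1: "B \<ge> 1" unfolding B_def by (simp add: sum_nonneg)
  have C1: "C \<ge> 1" unfolding C_def by (simp add: sum_nonneg)
  have dsum: "(\<Sum>k\<le>N. \<bar>coeff Dp k\<bar>) \<le> B - 1" for N
    using sum_abs_coeff_le[where p=Dp and N=N] by (simp add: B_def)
  have bound: "\<bar>c j\<bar> \<le> C * B^j" for j
  proof (induction j rule: less_induct)
    case (less j)
    have cj: "c j = coeff Mq j - (\<Sum>i<j. c i * coeff Dp (j-i))"
      using conv[of j] d0 by (simp add: lessThan_Suc_atMost[symmetric])
    have s1: "\<bar>\<Sum>i<j. c i * coeff Dp (j-i)\<bar> \<le> (\<Sum>i<j. C * B^i * \<bar>coeff Dp (j-i)\<bar>)"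
    proof -
      have "\<bar>\<Sum>i<j. c i * coeff Dp (j-i)\<bar> \<le> (\<Sum>i<j. \<bar>c i\<bar> * \<bar>coeff Dp (j-i)\<bar>)"
        by (rule order_trans[OF sum_abs]) (simp add: abs_mult)
      also have "\<dots> \<le> (\<Sum>i<j. C * B^i * \<bar>coeff Dp (j-i)\<bar>)"
        by (rule sum_mono) (use less.IH in \<open>auto intro: mult_right_mono\<close>)
      finally show ?thesis .
    qed
    show ?case
    proof (cases j)
      case 0
      then show ?thesis using cj abs_coeff_le[where p=Mq and j=j] by (simp add: C_def)
    next
      case (Suc j')
      have s2: "(\<Sum>i<j. C * B^i * \<bar>coeff Dp (j-i)\<bar>) \<le> (\<Sum>i<j. C * B^j' * \<bar>coeff Dp (j-i)\<bar>)"
        by (rule sum_mono) (use Suc B1 C1 in \<open>auto intro!: mult_right_mono mult_left_mono power_increasing\<close>)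
      have s3: "(\<Sum>i<j. \<bar>coeff Dp (j-i)\<bar>) \<le> B - 1"
      proof -
        have "(\<Sum>i<j. \<bar>coeff Dp (j-i)\<bar>) \<le> (\<Sum>k\<le>j. \<bar>coeff Dp k\<bar>)"
        proof -
          have "(\<Sum>i<j. \<bar>coeff Dp (j-i)\<bar>) = (\<Sum>k\<in>(\<lambda>i. j - i) ` {..<j}. \<bar>coeff Dp k\<bar>)"
            by (subst sum.reindex) (auto simp: inj_on_def)
          also have "\<dots> \<le> (\<Sum>k\<le>j. \<bar>coeff Dp k\<bar>)" by (rule sum_mono2) auto
          finally show ?thesis .
        qed
        then show ?thesis using dsum[of j] by linarith
      qed
      have "\<bar>c j\<bar> \<le> \<bar>coeff Mq j\<bar> + \<bar>\<Sum>i<j. c i * coeff Dp (j-i)\<bar>"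
        using cj by (simp add: abs_triangle_ineq4)
      also have "\<dots> \<le> C + C * B^j' * (B - 1)"
      proof -
        have "\<bar>coeff Mq j\<bar> \<le> C" using abs_coeff_le[where p=Mq and j=j] by (simp add: C_def)
        moreover have "(\<Sum>i<j. C * B^j' * \<bar>coeff Dp (j-i)\<bar>) = C * B^j' * (\<Sum>i<j. \<bar>coeff Dp (j-i)\<bar>)"
          by (simp add: sum_distrib_left)
        moreover have "C * B^j' * (\<Sum>i<j. \<bar>coeff Dp (j-i)\<bar>) \<le> C * B^j' * (B - 1)"
          using s3 B1 C1 by (intro mult_left_mono) auto
        ultimately show ?thesis using s1 s2 by linarith
      qed
      also have "\<dots> \<le> C * B^j' + C * B^j' * (B - 1)"
        using C1 B1 by (simp add: one_le_power)
      also have "\<dots> = C * B^j" using Suc by (simp add: algebra_simps)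
      finally show ?thesis .
    qed
  qed
  define \<epsilon> where "\<epsilon> = 1 / (2 * B)"
  have \<epsilon>: "\<epsilon> > 0" using B1 by (simp add: \<epsilon>_def)
  have main: "poly Dp t \<noteq> 0 \<and> (\<lambda>k. c k * t^k) sums (poly Mq t / poly Dp t)" if t: "\<bar>t\<bar> < \<epsilon>" for t
  proof -
    have Bt: "B * \<bar>t\<bar> < 1/2" using t B1 by (simp add: \<epsilon>_def field_simps)
    have "\<bar>t\<bar> \<le> B * \<bar>t\<bar>" using B1 mult_right_mono[of 1 B "\<bar>t\<bar>"] by simp
    then have t1: "\<bar>t\<bar> < 1" using Bt by linarith
    have absum: "summable (\<lambda>k. norm (c k * t^k))"
    proof (rule summable_comparison_test)
      show "\<exists>N. \<forall>n\<ge>N. norm (norm (c n * t ^ n)) \<le> C * (B * \<bar>t\<bar>)^n"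
      proof (intro exI[of _ 0] allI impI)
        fix n :: nat
        have "\<bar>c n\<bar> * \<bar>t\<bar>^n \<le> C * B^n * \<bar>t\<bar>^n" by (rule mult_right_mono[OF bound]) simp
        then show "norm (norm (c n * t ^ n)) \<le> C * (B * \<bar>t\<bar>)^n"
          by (simp add: abs_mult power_abs power_mult_distrib mult.assoc)
      qed
      show "summable (\<lambda>n. C * (B * \<bar>t\<bar>)^n)"
        using Bt B1 by (intro summable_mult summable_geometric) auto
    qed
    have dsumm: "summable (\<lambda>k. norm (coeff Dp k * t^k))"
      by (rule summable_finite[of "{..degree Dp}"]) (auto simp: coeff_eq_0)
    have cp: "(\<lambda>k. \<Sum>i\<le>k. (c i * t^i) * (coeff Dp (k-i) * t^(k-i))) sums
              ((\<Sum>k. c k * t^k) * (\<Sum>k. coeff Dp k * t^k))"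
      by (rule Cauchy_product_sums[OF absum dsumm])
    have inner: "(\<Sum>i\<le>k. (c i * t^i) * (coeff Dp (k-i) * t^(k-i))) = coeff Mq k * t^k" for k
    proof -
      have "(\<Sum>i\<le>k. (c i * t^i) * (coeff Dp (k-i) * t^(k-i))) = (\<Sum>i\<le>k. (c i * coeff Dp (k-i)) * t^k)"
        by (rule sum.cong) (auto simp: power_add[symmetric])
      also have "\<dots> = coeff Mq k * t^k" by (simp only: conv[of k, symmetric] sum_distrib_right)
      finally show ?thesis .
    qed
    have pD: "(\<Sum>k. coeff Dp k * t^k) = poly Dp t" using poly_sums sums_unique by metis
    have eq: "(\<Sum>k. c k * t^k) * poly Dp t = poly Mq t"
      using cp unfolding inner pD using poly_sums sums_unique by metis
    have nz: "poly Dp t \<noteq> 0"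
    proof -
      have "poly Dp t = (\<Sum>k\<le>degree Dp. coeff Dp k * t^k)" by (simp add: poly_altdef)
      also have "\<dots> = 1 + (\<Sum>k\<in>{1..degree Dp}. coeff Dp k * t^k)"
      proof -
        have "{..degree Dp} = insert 0 {1..degree Dp}" by auto
        then show ?thesis using d0 by simp
      qed
      finally have pe: "poly Dp t = 1 + (\<Sum>k\<in>{1..degree Dp}. coeff Dp k * t^k)" .
      have "\<bar>\<Sum>k\<in>{1..degree Dp}. coeff Dp k * t^k\<bar> \<le> (\<Sum>k\<in>{1..degree Dp}. \<bar>coeff Dp k\<bar> * \<bar>t\<bar>)"
      proof -
        have "\<bar>\<Sum>k\<in>{1..degree Dp}. coeff Dp k * t^k\<bar> \<le> (\<Sum>k\<in>{1..degree Dp}. \<bar>coeff Dp k * t^k\<bar>)"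
          by (rule sum_abs)
        also have "\<dots> \<le> (\<Sum>k\<in>{1..degree Dp}. \<bar>coeff Dp k\<bar> * \<bar>t\<bar>)"
        proof (rule sum_mono)
          fix k assume "k \<in> {1..degree Dp}"
          then have "\<bar>t\<bar>^k \<le> \<bar>t\<bar>^1" using t1 by (intro power_decreasing) auto
          then have "\<bar>t\<bar>^k \<le> \<bar>t\<bar>" by simp
          then show "\<bar>coeff Dp k * t^k\<bar> \<le> \<bar>coeff Dp k\<bar> * \<bar>t\<bar>"
            by (simp add: abs_mult power_abs mult_left_mono)
        qed
        finally show ?thesis .
      qed
      also have "\<dots> = (\<Sum>k\<in>{1..degree Dp}. \<bar>coeff Dp k\<bar>) * \<bar>t\<bar>" by (simp add: sum_distrib_right)
      also have "\<dots> \<le> (B - 1) * \<bar>t\<bar>"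
      proof -
        have "(\<Sum>k\<in>{1..degree Dp}. \<bar>coeff Dp k\<bar>) \<le> (\<Sum>k\<le>degree Dp. \<bar>coeff Dp k\<bar>)"
          by (rule sum_mono2) auto
        then show ?thesis by (intro mult_right_mono) (auto simp: B_def)
      qed
      also have "\<dots> < 1/2"
      proof -
        have "(B - 1) * \<bar>t\<bar> = B * \<bar>t\<bar> - \<bar>t\<bar>" by (simp add: algebra_simps)
        then show ?thesis using Bt by simp
      qed
      finally show ?thesis using pe by linarith
    qed
    have "(\<lambda>k. c k * t^k) sums (\<Sum>k. c k * t^k)"
      by (rule summable_sums[OF summable_norm_cancel[OF absum]])
    moreover have "(\<Sum>k. c k * t^k) = poly Mq t / poly Dp t" using eq nz by (simp add: field_simps)
    ultimately show ?thesis using nz by simp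
  qed
  show ?thesis using \<epsilon> main by blast
qed

lemma Pp_at0: "poly (Pp m) 0 = 1"
  by (induction m rule: Pp.induct) simp_all

lemma Pp_coeff0: "coeff (Pp m) 0 = 1"
  using Pp_at0[of m] by (simp add: poly_0_coeff_0)

lemma P_cheb_Pp:
  assumes t: "t > 0"
  shows "P_cheb m t = poly (Pp m) t"
proof (induction m rule: Pp.induct)
  case 1
  then show ?case using t by (simp add: P_cheb_def)
next
  case 2
  have "P_cheb 1 t = sqrt t * (1 / sqrt t - sqrt t)"
    using t by (simp add: P_cheb_def powr_half_sqrt)
  also have "\<dots> = 1 - t" using t by (simp add: field_simps)
  finally show ?case by simp
next
  case (3 m)
  define x where "x = 1 / sqrt t - sqrt t"
  have sx: "sqrt t * x = 1 - t" using t by (simp add: x_def field_simps)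
  have p1: "t powr (real (Suc (Suc m)) / 2) = sqrt t * t powr (real (Suc m) / 2)"
  proof -
    have e: "real (Suc (Suc m)) / 2 = 1/2 + real (Suc m) / 2" by simp
    show ?thesis by (subst e, subst powr_add) (simp add: powr_half_sqrt t less_imp_le)
  qed
  have p2: "t powr (real (Suc (Suc m)) / 2) = t * t powr (real m / 2)"
  proof -
    have e: "real (Suc (Suc m)) / 2 = 1 + real m / 2" by simp
    show ?thesis by (subst e, subst powr_add) (simp add: t less_imp_le)
  qed
  have A: "t powr (real (Suc (Suc m)) / 2) * x * chebU (Suc m) x
      = (sqrt t * x) * (t powr (real (Suc m) / 2) * chebU (Suc m) x)"
    unfolding p1 by (simp add: algebra_simps)
  have Bq: "t powr (real (Suc (Suc m)) / 2) * chebU m x = t * (t powr (real m / 2) * chebU m x)"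
    unfolding p2 by simp
  have "P_cheb (Suc (Suc m)) t = t powr (real (Suc (Suc m)) / 2) * (x * chebU (Suc m) x - chebU m x)"
    by (simp add: P_cheb_def x_def)
  also have "\<dots> = t powr (real (Suc (Suc m)) / 2) * x * chebU (Suc m) x
      - t powr (real (Suc (Suc m)) / 2) * chebU m x"
    by (simp add: algebra_simps)
  also have "\<dots> = (sqrt t * x) * (t powr (real (Suc m) / 2) * chebU (Suc m) x)
      - t * (t powr (real m / 2) * chebU m x)"
    unfolding A Bq ..
  also have "\<dots> = (1 - t) * P_cheb (Suc m) t - t * P_cheb m t"
    unfolding sx by (simp add: P_cheb_def x_def)
  also have "\<dots> = poly (Pp (Suc (Suc m))) t" using 3 by (simp add: algebra_simps)
  finally show ?case .
qed

lemma part1: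
  assumes r: "r \<ge> 1" and Q: "is_Ar_Qsystem r R" and I: "\<forall>\<alpha>\<in>{1..r}. R \<alpha> 0 = 1 \<and> R \<alpha> 1 = 1"
  shows "\<exists>\<epsilon>>0. \<forall>t::real. 0 < t \<and> t < \<epsilon> \<longrightarrow>
               (\<lambda>n. R 1 (int n) * t ^ n) sums (1 + t * P_cheb r t / P_cheb (r + 1) t)"
proof -
  obtain \<epsilon> where \<epsilon>: "\<epsilon> > 0" and H: "\<And>t. \<bar>t\<bar> < \<epsilon> \<Longrightarrow> poly (Pp (r+1)) t \<noteq> 0 \<and>
      (\<lambda>k. X r (Suc k) 1 * t^k) sums (poly (Pp r) t / poly (Pp (r+1)) t)"
    using series_rational[of "Pp (r+1)" "\<lambda>i. X r (Suc i) 1" "Pp r"] Pp_coeff0 coeff_identity[OF r]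
    by blast
  have RX: "R 1 (int n) = X r n 1" for n
    using Ar_unique[OF Q I, of n] r by (simp add: X_def)
  show ?thesis
  proof (intro exI[of _ \<epsilon>] conjI allI impI)
    show "\<epsilon> > 0" by fact
    fix t :: real assume t: "0 < t \<and> t < \<epsilon>"
    then have s: "(\<lambda>k. X r (Suc k) 1 * t^k) sums (poly (Pp r) t / poly (Pp (r+1)) t)" using H by simp
    have "(\<lambda>k. t * (X r (Suc k) 1 * t^k)) sums (t * (poly (Pp r) t / poly (Pp (r+1)) t))"
      by (rule sums_mult[OF s])
    then have "(\<lambda>k. X r (Suc k) 1 * t^Suc k) sums (t * (poly (Pp r) t / poly (Pp (r+1)) t))"
      by (simp add: algebra_simps)
    then have "(\<lambda>k. X r k 1 * t^k) sums (t * (poly (Pp r) t / poly (Pp (r+1)) t) + X r 0 1 * t^0)"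
      by (subst sums_Suc_iff[symmetric]) simp
    moreover have eqf: "(\<lambda>n. R 1 (int n) * t ^ n) = (\<lambda>k. X r k 1 * t^k)"
      by (intro ext) (metis RX)
    moreover have "1 + t * P_cheb r t / P_cheb (r + 1) t = t * (poly (Pp r) t / poly (Pp (r+1)) t) + X r 0 1 * t^0"
      using t by (simp add: P_cheb_Pp)
    ultimately show "(\<lambda>n. R 1 (int n) * t ^ n) sums (1 + t * P_cheb r t / P_cheb (r + 1) t)"
      by (simp add: add.commute)
  qed
qed

unbundle fps_syntax

lemma lightcone:
  "a + m \<le> N + 2 \<Longrightarrow> Rg (Br N) a m = Rg (\<lambda>a. a = 0) a m"
proof (induction m arbitrary: a rule: less_induct)
  case (less m)
  show ?case
  proof (cases m)
    case 0 then show ?thesis by simp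
  next
    case (Suc m1)
    show ?thesis
    proof (cases m1)
      case 0 then show ?thesis using Suc by simp
    next
      case (Suc m')
      note mm = \<open>m = Suc m1\<close> Suc
      show ?thesis
      proof (cases "a = 0")
        case True
        then show ?thesis by (simp add: Rg_bd Br_def)
      next
        case False
        have nb: "\<not> Br N a" using False less.prems mm by (simp add: Br_def)
        have i1: "Rg (Br N) a (Suc m') = Rg (\<lambda>a. a = 0) a (Suc m')"
          using less.IH[of "Suc m'" a] less.prems mm by simp
        have i2: "Rg (Br N) (Suc a) (Suc m') = Rg (\<lambda>a. a = 0) (Suc a) (Suc m')"
          using less.IH[of "Suc m'" "Suc a"] less.prems mm by simp
        have i3: "Rg (Br N) (a - 1) (Suc m') = Rg (\<lambda>a. a = 0) (a - 1) (Suc m')"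
          using less.IH[of "Suc m'" "a - 1"] less.prems mm by simp
        have i4: "Rg (Br N) a m' = Rg (\<lambda>a. a = 0) a m'"
          using less.IH[of "m'" a] less.prems mm by simp
        show ?thesis using nb False mm i1 i2 i3 i4 by (simp add: Rg.simps(3))
      qed
    qed
  qed
qed

definition CN :: "nat \<Rightarrow> real fps" where "CN N = Abs_fps (\<lambda>i. X N (Suc i) 1)"

lemma CN_eq:
  assumes "1 \<le> N"
  shows "CN N * fps_of_poly (Pp (N+1)) = fps_of_poly (Pp N)"
proof (rule fps_ext)
  fix n
  show "(CN N * fps_of_poly (Pp (N+1))) $ n = fps_of_poly (Pp N) $ n"
    using coeff_identity[OF assms, of n] by (simp add: fps_mult_nth CN_def atLeast0AtMost)
qed

lemma fps_Pp_rec: "fps_of_poly (Pp (Suc (Suc m))) =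
   (1 - fps_X) * fps_of_poly (Pp (Suc m)) - fps_X * fps_of_poly (Pp m)"
proof -
  have "fps_of_poly [:1, -1::real:] = 1 - fps_X"
    by (simp add: fps_of_poly_pCons fps_const_neg)
  then show ?thesis
    by (simp add: fps_of_poly_mult fps_of_poly_diff fps_of_poly_pCons mult.commute)
qed

lemma CN_quad:
  assumes "2 \<le> N"
  shows "CN N * (1 - fps_X - fps_X * CN (N - 1)) = 1"
proof -
  obtain m where m: "N = Suc (Suc m)" using assms by (metis add_2_eq_Suc le_Suc_ex)
  have e1: "CN N * fps_of_poly (Pp (Suc N)) = fps_of_poly (Pp N)" using CN_eq[of N] assms by simp
  have e2: "CN (Suc m) * fps_of_poly (Pp N) = fps_of_poly (Pp (Suc m))"
    using CN_eq[of "Suc m"] m by simp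
  have nz: "fps_of_poly (Pp N) \<noteq> 0"
  proof
    assume "fps_of_poly (Pp N) = 0"
    then have "fps_of_poly (Pp N) $ 0 = 0" by simp
    then show False using Pp_coeff0[of N] by simp
  qed
  have "CN N * (1 - fps_X - fps_X * CN (N - 1)) * fps_of_poly (Pp N)
      = CN N * ((1 - fps_X) * fps_of_poly (Pp N) - fps_X * (CN (Suc m) * fps_of_poly (Pp N)))"
    using m by (simp add: algebra_simps)
  also have "\<dots> = CN N * fps_of_poly (Pp (Suc N))"
    unfolding e2 using fps_Pp_rec[of "Suc m"] m by simp
  also have "\<dots> = 1 * fps_of_poly (Pp N)" using e1 by simp
  finally show ?thesis using nz by (metis mult_right_cancel)
qed

definition sS :: "nat \<Rightarrow> real" where "sS j = Rg (\<lambda>a. a = 0) 1 (Suc j)"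

lemma CN_nth: "i \<le> N \<Longrightarrow> CN N $ i = sS i"
  unfolding CN_def sS_def X_def using lightcone[of 1 "Suc i" N] by simp

lemma sS0: "sS 0 = 1" by (simp add: sS_def)

lemma sS_nonneg: "sS j \<ge> 0" unfolding sS_def using Rg_pos less_imp_le by blast

lemma sS_rec: "sS (Suc k) = sS k + (\<Sum>i\<le>k. sS i * sS (k - i))"
proof -
  define N where "N = k + 3"
  have N2: "2 \<le> N" by (simp add: N_def)
  have "(CN N * (1 - fps_X - fps_X * CN (N - 1))) $ Suc k = (1::real fps) $ Suc k"
    using CN_quad[OF N2] by simp
  then have "CN N $ Suc k - CN N $ k - (CN N * CN (N-1)) $ k = 0"
    by (simp add: algebra_simps)
  moreover have "(CN N * CN (N-1)) $ k = (\<Sum>i\<le>k. sS i * sS (k - i))"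
    by (simp add: fps_mult_nth atLeast0AtMost CN_nth N_def)
  ultimately show ?thesis using CN_nth[of "Suc k" N] CN_nth[of k N] by (simp add: N_def)
qed

lemma conv_le_sq:
  fixes f :: "nat \<Rightarrow> real"
  assumes nn: "\<And>i. f i \<ge> 0"
  shows "(\<Sum>k<K. \<Sum>i\<le>k. f i * f (k - i)) \<le> (\<Sum>i<K. f i) * (\<Sum>i<K. f i)"
proof -
  have "(\<Sum>k<K. \<Sum>i\<le>k. f i * f (k - i)) = (\<Sum>(i,j)\<in>{(i,j). i+j < K}. f i * f j)"
    by (rule sum.triangle_reindex[symmetric])
  also have "\<dots> \<le> (\<Sum>(i,j)\<in>{..<K} \<times> {..<K}. f i * f j)"
    by (rule sum_mono2) (auto simp: nn)
  also have "\<dots> = (\<Sum>i<K. f i) * (\<Sum>i<K. f i)"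
    by (simp add: sum_product sum.cartesian_product)
  finally show ?thesis .
qed

lemma schroeder_series:
  fixes s :: "nat \<Rightarrow> real"
  assumes s0: "s 0 = 1" and nn: "\<And>j. s j \<ge> 0"
    and rec: "\<And>k. s (Suc k) = s k + (\<Sum>i\<le>k. s i * s (k - i))"
    and t: "\<bar>t\<bar> \<le> 1/10"
  shows "(\<lambda>k. s k * t^k) sums ((1 - t - sqrt (1 - 6*t + t^2)) / (2*t)) \<or> t = 0"
    and "(\<lambda>k. s k * t^k) sums g \<Longrightarrow> 2 * t * g = 1 - t - sqrt (1 - 6*t + t^2)"
    and "summable (\<lambda>k. s k * t^k)"
proof -
  define P where "P K x = (\<Sum>k<K. s k * x^k)" for K and x :: real
  have Pnn: "0 \<le> x \<Longrightarrow> P K x \<ge> 0" for K x unfolding P_def using nn by (auto intro!: sum_nonneg)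
  have Pb: "0 \<le> x \<Longrightarrow> x \<le> 1/10 \<Longrightarrow> P K x \<le> 2" for K x
  proof (induction K)
    case 0 then show ?case by (simp add: P_def)
  next
    case (Suc K)
    have "P (Suc K) x = s 0 * x^0 + (\<Sum>k<K. s (Suc k) * x^(Suc k))"
      unfolding P_def by (subst sum.lessThan_Suc_shift) simp
    also have "\<dots> = 1 + x * P K x + x * (\<Sum>k<K. \<Sum>i\<le>k. (s i * x^i) * (s (k-i) * x^(k-i)))"
    proof -
      have "(\<Sum>i\<le>k. (s i * x^i) * (s (k-i) * x^(k-i))) = (\<Sum>i\<le>k. s i * s (k-i)) * x^k" for k
      proof -
        have "(\<Sum>i\<le>k. (s i * x^i) * (s (k-i) * x^(k-i))) = (\<Sum>i\<le>k. s i * s (k-i) * x^k)"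
          by (rule sum.cong) (auto simp: power_add[symmetric])
        also have "\<dots> = (\<Sum>i\<le>k. s i * s (k-i)) * x^k" by (simp add: sum_distrib_right)
        finally show ?thesis .
      qed
      then show ?thesis
        by (simp add: rec s0 P_def algebra_simps sum.distrib sum_distrib_left sum_distrib_right)
    qed
    also have "\<dots> \<le> 1 + x * P K x + x * (P K x * P K x)"
    proof -
      have "(\<Sum>k<K. \<Sum>i\<le>k. (s i * x^i) * (s (k-i) * x^(k-i))) \<le> P K x * P K x"
        unfolding P_def using conv_le_sq[of "\<lambda>i. s i * x^i" K] nn Suc.prems by simp
      then show ?thesis using Suc.prems by (simp add: mult_left_mono)
    qed
    also have "\<dots> \<le> 1 + x * 2 + x * (2 * 2)"
    proof -
      have a: "P K x \<le> 2" using Suc by simp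
      have b: "P K x \<ge> 0" using Pnn Suc.prems by simp
      have "P K x * P K x \<le> 2 * 2" using a b by (intro mult_mono) auto
      then have c: "x * (P K x * P K x) \<le> x * (2 * 2)" using Suc.prems by (intro mult_left_mono) auto
      have d: "x * P K x \<le> x * 2" using a Suc.prems by (intro mult_left_mono) auto
      show ?thesis using c d by linarith
    qed
    also have "\<dots> \<le> 2" using Suc.prems by simp
    finally show ?case .
  qed
  have at: "0 \<le> \<bar>t\<bar>" "\<bar>t\<bar> \<le> 1/10" using t by auto
  have absum: "summable (\<lambda>k. norm (s k * t^k))"
  proof -
    have "summable (\<lambda>k. s k * \<bar>t\<bar>^k)"
    proof (rule bounded_imp_summable)
      show "0 \<le> s n * \<bar>t\<bar>^n" for n using nn by simp
      show "(\<Sum>k\<le>n. s k * \<bar>t\<bar>^k) \<le> 2" for n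
        using Pb[OF at, of "Suc n"] by (simp add: P_def lessThan_Suc_atMost)
    qed
    then show ?thesis using nn by (simp add: abs_mult power_abs)
  qed
  define g where "g = (\<Sum>k. s k * t^k)"
  have gs: "(\<lambda>k. s k * t^k) sums g"
    unfolding g_def by (rule summable_sums[OF summable_norm_cancel[OF absum]])
  have gb: "\<bar>g\<bar> \<le> 2"
  proof -
    have "\<bar>g\<bar> \<le> (\<Sum>k. norm (s k * t^k))"
      unfolding g_def using summable_norm[OF absum] by simp
    also have "\<dots> \<le> 2"
    proof (rule suminf_le_const[OF absum])
      fix n
      show "(\<Sum>k<n. norm (s k * t^k)) \<le> 2"
        using Pb[OF at, of n] nn by (simp add: P_def abs_mult power_abs)
    qed
    finally show ?thesis .
  qed
  have cp: "(\<lambda>k. \<Sum>i\<le>k. (s i * t^i) * (s (k-i) * t^(k-i))) sums (g * g)"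
    using Cauchy_product_sums[OF absum absum] by (simp add: g_def)
  have inner: "(\<Sum>i\<le>k. (s i * t^i) * (s (k-i) * t^(k-i))) = (\<Sum>i\<le>k. s i * s (k-i)) * t^k" for k
  proof -
    have "(\<Sum>i\<le>k. (s i * t^i) * (s (k-i) * t^(k-i))) = (\<Sum>i\<le>k. s i * s (k-i) * t^k)"
      by (rule sum.cong) (auto simp: power_add[symmetric])
    also have "\<dots> = (\<Sum>i\<le>k. s i * s (k-i)) * t^k" by (simp add: sum_distrib_right)
    finally show ?thesis .
  qed
  have sh: "(\<lambda>k. s (Suc k) * t^k) sums (g + g * g)"
  proof -
    have "(\<lambda>k. s k * t^k + (\<Sum>i\<le>k. s i * s (k-i)) * t^k) sums (g + g * g)"
      using sums_add[OF gs cp[unfolded inner]] .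
    then show ?thesis by (simp add: rec algebra_simps)
  qed
  have "(\<lambda>k. t * (s (Suc k) * t^k)) sums (t * (g + g * g))" by (rule sums_mult[OF sh])
  then have "(\<lambda>k. s (Suc k) * t^(Suc k)) sums (t * (g + g * g))" by (simp add: mult_ac)
  then have "(\<lambda>k. s k * t^k) sums (t * (g + g * g) + s 0 * t^0)"
    by (subst sums_Suc_iff[symmetric]) simp
  then have "t * (g + g * g) + s 0 * t^0 = g" by (rule sums_unique2[OF _ gs])
  then have geq: "g = t * (g + g * g) + 1" using s0 by simp
  define D where "D = 1 - 6*t + t^2"
  have sq: "(2*t*g - (1 - t))^2 = D"
  proof -
    have e: "t*g*g = g - t*g - 1" using geq by (simp add: algebra_simps)
    have "(2*t*g - (1 - t))^2 = 4*t*(t*g*g) - 4*t*g*(1-t) + (1-t)^2"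
      by (simp add: power2_eq_square algebra_simps)
    also have "\<dots> = D" unfolding e D_def by (simp add: power2_eq_square algebra_simps)
    finally show ?thesis .
  qed
  have key: "2 * t * g = 1 - t - sqrt D"
  proof -
    have "\<bar>2*t*g - (1 - t)\<bar> = sqrt D" using sq by (metis real_sqrt_abs)
    moreover have "2*t*g - (1 - t) < 0"
    proof -
      have "\<bar>t\<bar> * \<bar>g\<bar> \<le> (1/10) * 2" using at gb by (intro mult_mono) auto
      then have "\<bar>2*t*g\<bar> \<le> 2/5" by (simp add: abs_mult mult_ac)
      then show ?thesis using t by linarith
    qed
    ultimately show ?thesis by linarith
  qed
  show "(\<lambda>k. s k * t^k) sums ((1 - t - sqrt (1 - 6*t + t^2)) / (2*t)) \<or> t = 0"
  proof (cases "t = 0")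
    case False
    then have "g = (1 - t - sqrt (1 - 6*t + t^2)) / (2*t)" using key unfolding D_def
      by (simp add: field_simps)
    then show ?thesis using gs by simp
  qed simp
  show "2 * t * g' = 1 - t - sqrt (1 - 6*t + t^2)" if "(\<lambda>k. s k * t^k) sums g'" for g'
    using key sums_unique2[OF that gs] unfolding D_def by simp
  show "summable (\<lambda>k. s k * t^k)" by (rule summable_norm_cancel[OF absum])
qed

lemma part2:
  assumes Q: "is_Ainf_Qsystem R" and I: "\<forall>\<alpha>\<ge>1. R \<alpha> 0 = 1 \<and> R \<alpha> 1 = 1"
  shows "\<exists>\<epsilon>>0. \<forall>t::real. \<bar>t\<bar> < \<epsilon> \<longrightarrow>
               (\<lambda>n. R 1 (int n) * t ^ n) sums ((3 - t - sqrt (1 - 6 * t + t^2)) / 2)"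
proof (intro exI[of _ "1/10"] conjI allI impI)
  show "(1/10::real) > 0" by simp
  fix t :: real assume t: "\<bar>t\<bar> < 1/10"
  then have t': "\<bar>t\<bar> \<le> 1/10" by simp
  have RX: "R 1 (int n) = Rg (\<lambda>a. a = 0) 1 n" for n
    using Ainf_unique[OF Q I, of n] by simp
  have sm: "summable (\<lambda>k. sS k * t^k)"
    using schroeder_series(3)[OF sS0 sS_nonneg sS_rec t'] .
  define g where "g = (\<Sum>k. sS k * t^k)"
  have gs: "(\<lambda>k. sS k * t^k) sums g" unfolding g_def using sm by (rule summable_sums)
  have key: "2 * t * g = 1 - t - sqrt (1 - 6*t + t^2)"
    using schroeder_series(2)[OF sS0 sS_nonneg sS_rec t' gs] .
  have "(\<lambda>k. t * (sS k * t^k)) sums (t * g)" by (rule sums_mult[OF gs])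
  moreover have "(\<lambda>k. R 1 (int (Suc k)) * t^(Suc k)) = (\<lambda>k. t * (sS k * t^k))"
    by (rule ext) (simp only: RX sS_def power_Suc mult_ac)
  ultimately have "(\<lambda>k. R 1 (int (Suc k)) * t^(Suc k)) sums (t * g)" by simp
  then have S: "(\<lambda>n. R 1 (int n) * t^n) sums (t * g + R 1 (int 0) * t^0)"
    by (subst sums_Suc_iff[symmetric]) simp
  have E: "t * g + R 1 (int 0) * t^0 = (3 - t - sqrt (1 - 6 * t + t^2)) / 2"
    using key RX[of 0] by (simp add: field_simps)
  from S show "(\<lambda>n. R 1 (int n) * t ^ n) sums ((3 - t - sqrt (1 - 6 * t + t^2)) / 2)"
    by (simp only: E)
qed

theorem mainTheorem15:
  shows "(\<forall>r::nat. \<forall>R. r \<ge> 1 \<and> is_Ar_Qsystem r R \<and>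
            (\<forall>\<alpha>\<in>{1..r}. R \<alpha> 0 = 1 \<and> R \<alpha> 1 = 1) \<longrightarrow>
            (\<exists>\<epsilon>>0. \<forall>t::real. 0 < t \<and> t < \<epsilon> \<longrightarrow>
               (\<lambda>n. R 1 (int n) * t ^ n) sums (1 + t * P_cheb r t / P_cheb (r + 1) t)))
     \<and> (\<forall>R. is_Ainf_Qsystem R \<and> (\<forall>\<alpha>\<ge>1. R \<alpha> 0 = 1 \<and> R \<alpha> 1 = 1) \<longrightarrow>
            (\<exists>\<epsilon>>0. \<forall>t::real. \<bar>t\<bar> < \<epsilon> \<longrightarrow>
               (\<lambda>n. R 1 (int n) * t ^ n) sums ((3 - t - sqrt (1 - 6 * t + t^2)) / 2)))"
  using part1 part2 by blast

end
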